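(* $\widehat{\mathbb{C}^{\mathcal{D}_0}}$ is an algebraically closed field, $\widehat{\mathbb{R}^{\mathcal{D}_0}}$ is a real closed field, and $\widehat{\mathbb{C}^{\mathcal{D}_0}}=\widehat{\mathbb{R}^{\mathcal{D}_0}}\oplus i\,\widehat{\mathbb{R}^{\mathcal{D}_0}}$.
   Context: Fix $d\in\mathbb{N}$ and let $\mathcal{D}_0=\mathcal{D}(\mathbb{R}^d)$ (compactly supported $C^\infty$ functions $\mathbb{R}^d\to\mathbb{C}$). For $\varphi\in\mathcal{D}_0$ let $R_\varphi=\sup\{\|x\|:\varphi(x)\neq0\}$ if $\varphi\neq0$, $R_0=1$. For $n\in\mathbb{N}$, $\mathcal{D}_n$ is the set of $\varphi\in\mathcal{D}_0$ that are real-valued, even, with $R_\varphi\le1/n$, $\int\varphi=1$, $\int x^\alpha\varphi(x)dx=0$ for $1\le|\alpha|\le n$, $\int|\varphi|\le1+1/n$, and $\sup_x|\partial^\alpha\varphi(x)|\le R_\varphi^{-2(|\alpha|+d)}$ for $|\alpha|\le n$. Let $\mathfrak c=\mathrm{card}(\mathbb{R})$ and let $\mathcal{U}$ be a fixed free ultrafilter on $\mathcal{D}_0$ containing every $\mathcal{D}_n$ and which is $\mathfrak{c}^+$-good (for every $\Gamma\subseteq\mathcal{D}_0$ with $\mathrm{card}\,\Gamma\le\mathfrak c$ and every map $R$ from finite subsets of $\Gamma$ into $\mathcal{U}$ with $X\subseteq Y\Rightarrow R(X)\supseteq R(Y)$, there is a map $S$ from finite subsets of $\Gamma$ into $\mathcal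 U$ with $S(X\cup Y)=S(X)\cap S(Y)$ and $S(X)\subseteq R(X)$). A property $P(\varphi)$ holds a.e. if $\{\varphi\in\mathcal{D}_0:P(\varphi)\}\in\mathcal{U}$. A net is a map $\mathcal{D}_0\to\mathbb{C}$, written $(A_\varphi)$. $\mathcal{M}(\mathbb{C}^{\mathcal{D}_0})$ is the set of nets for which there is $m\in\mathbb{N}$ with $|A_\varphi|\le R_\varphi^{-m}$ a.e.; $\mathcal{N}(\mathbb{C}^{\mathcal{D}_0})$ is the set of nets with $|A_\varphi|<R_\varphi^{p}$ a.e. for every $p\in\mathbb{N}$. $\widehat{\mathbb{C}^{\mathcal{D}_0}}=\mathcal{M}(\mathbb{C}^{\mathcal{D}_0})/\mathcal{N}(\mathbb{C}^{\mathcal{D}_0})$ with pointwise ring operations; $\widehat{A_\varphi}$ is the class of $(A_\varphi)$; $\widehat{\mathbb{R}^{\mathcal{D}_0}}$ is the set of classes of real-valued moderate nets. $\mathbb{C}$ embeds via constant nets. *)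

theory Defs
  imports "HOL-Analysis.Analysis" "HOL-Algebra.Algebraic_Closure"
begin

type_synonym 'd tf = "real^'d \<Rightarrow> complex"
type_synonym 'd net = "'d tf \<Rightarrow> complex"

definition pdir :: "'d::finite \<Rightarrow> 'd tf \<Rightarrow> 'd tf" where
  "pdir i f = (\<lambda>x. frechet_derivative f (at x) (axis i 1))"

fun pdirs :: "'d::finite list \<Rightarrow> 'd tf \<Rightarrow> 'd tf" where
  "pdirs [] f = f"
| "pdirs (i # is) f = pdir i (pdirs is f)"

definition smooth_fn :: "'d::finite tf \<Rightarrow> bool" where
  "smooth_fn f \<longleftrightarrow> (\<forall>is x. pdirs is f differentiable (at x))"

definition testfns :: "'d::finite tf set" where
  "testfns = {f. smooth_fn f \<and> compact (closure {x. f x \<noteq> 0})}"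

definition Rphi :: "'d::finite tf \<Rightarrow> real" where
  "Rphi f = (if f = (\<lambda>_. 0) then 1 else Sup {norm x | x. f x \<noteq> 0})"

definition Dn :: "nat \<Rightarrow> 'd::finite tf set" where
  "Dn n = {\<phi> \<in> testfns.
     (\<forall>x. Im (\<phi> x) = 0) \<and> (\<forall>x. \<phi> (- x) = \<phi> x) \<and>
     Rphi \<phi> \<le> 1 / real n \<and>
     (LINT x|lborel. \<phi> x) = 1 \<and>
     (\<forall>\<alpha>::'d \<Rightarrow> nat. 1 \<le> sum \<alpha> UNIV \<and> sum \<alpha> UNIV \<le> n \<longrightarrow>
        (LINT x|lborel. complex_of_real (\<Prod>i\<in>UNIV. (x $ i) ^ \<alpha> i) * \<phi> x) = 0) \<and>
     (LINT x|lborel. norm (\<phi> x)) \<le> 1 + 1 / real n \<and>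
     (\<forall>is. length is \<le> n \<longrightarrow>
        (\<forall>x. norm (pdirs is \<phi> x) \<le> inverse (Rphi \<phi> ^ (2 * (length is + CARD('d))))))}"

definition free_ultrafilter_on :: "'a set \<Rightarrow> 'a set set \<Rightarrow> bool" where
  "free_ultrafilter_on D U \<longleftrightarrow>
     U \<subseteq> Pow D \<and> D \<in> U \<and> {} \<notin> U \<and>
     (\<forall>A B. A \<in> U \<and> B \<in> U \<longrightarrow> A \<inter> B \<in> U) \<and>
     (\<forall>A B. A \<in> U \<and> A \<subseteq> B \<and> B \<subseteq> D \<longrightarrow> B \<in> U) \<and>
     (\<forall>A. A \<subseteq> D \<longrightarrow> A \<in> U \<or> D - A \<in> U) \<and>
     \<Inter>U = {}"

definition cplus_good :: "'a set \<Rightarrow> 'a set set \<Rightarrow> bool" where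
  "cplus_good D U \<longleftrightarrow>
     (\<forall>(\<Gamma>::'a set) (R::'a set \<Rightarrow> 'a set).
        \<Gamma> \<subseteq> D \<and> (\<exists>f::'a \<Rightarrow> real. inj_on f \<Gamma>) \<and>
        (\<forall>F1. finite F1 \<and> F1 \<subseteq> \<Gamma> \<longrightarrow> R F1 \<in> U) \<and>
        (\<forall>F1 F2. finite F2 \<and> F1 \<subseteq> F2 \<and> F2 \<subseteq> \<Gamma> \<longrightarrow> R F2 \<subseteq> R F1)
      \<longrightarrow> (\<exists>S::'a set \<Rightarrow> 'a set.
            (\<forall>F1. finite F1 \<and> F1 \<subseteq> \<Gamma> \<longrightarrow> S F1 \<in> U \<and> S F1 \<subseteq> R F1) \<and>
            (\<forall>F1 F2. finite F1 \<and> finite F2 \<and> F1 \<subseteq> \<Gamma> \<and> F2 \<subseteq> \<Gamma> \<longrightarrow>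
               S (F1 \<union> F2) = S F1 \<inter> S F2)))"

definition moderate :: "'d::finite tf set set \<Rightarrow> 'd net \<Rightarrow> bool" where
  "moderate U A \<longleftrightarrow>
     (\<exists>m::nat. {\<phi> \<in> testfns. norm (A \<phi>) \<le> inverse (Rphi \<phi> ^ m)} \<in> U)"

definition negligible_net :: "'d::finite tf set set \<Rightarrow> 'd net \<Rightarrow> bool" where
  "negligible_net U A \<longleftrightarrow>
     (\<forall>p::nat. {\<phi> \<in> testfns. norm (A \<phi>) < Rphi \<phi> ^ p} \<in> U)"

definition cls :: "'d::finite tf set set \<Rightarrow> 'd net \<Rightarrow> 'd net set" where
  "cls U A = {B. moderate U B \<and> negligible_net U (\<lambda>\<phi>. B \<phi> - A \<phi>)}"

definition Chat :: "'d::finite tf set set \<Rightarrow> 'd net set ring" where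
  "Chat U = \<lparr> carrier = cls U ` {A. moderate U A},
     mult = (\<lambda>P Q. {C. moderate U C \<and>
               (\<exists>A\<in>P. \<exists>B\<in>Q. negligible_net U (\<lambda>\<phi>. C \<phi> - A \<phi> * B \<phi>))}),
     one = cls U (\<lambda>_. 1),
     zero = cls U (\<lambda>_. 0),
     add = (\<lambda>P Q. {C. moderate U C \<and>
               (\<exists>A\<in>P. \<exists>B\<in>Q. negligible_net U (\<lambda>\<phi>. C \<phi> - (A \<phi> + B \<phi>)))}) \<rparr>"

definition Rhat :: "'d::finite tf set set \<Rightarrow> 'd net set set" where
  "Rhat U = cls U ` {A. moderate U A \<and> (\<forall>\<phi>. A \<phi> \<in> \<real>)}"

text \<open>Real closed field (Artin-Schreier characterisation without reference to an order):
  formally real, every element or its negative is a square, odd degree polynomials have a root.\<close>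
definition real_closed :: "('a, 'b) ring_scheme \<Rightarrow> bool" where
  "real_closed R \<longleftrightarrow> field R \<and>
     (\<forall>(n::nat) f. f \<in> {..<n} \<rightarrow> carrier R \<longrightarrow>
        finsum R (\<lambda>k. f k \<otimes>\<^bsub>R\<^esub> f k) {..<n} \<noteq> \<ominus>\<^bsub>R\<^esub> \<one>\<^bsub>R\<^esub>) \<and>
     (\<forall>a\<in>carrier R. \<exists>b\<in>carrier R. b \<otimes>\<^bsub>R\<^esub> b = a \<or> b \<otimes>\<^bsub>R\<^esub> b = \<ominus>\<^bsub>R\<^esub> a) \<and>
     (\<forall>p\<in>carrier (poly_ring R). odd (Polynomials.degree p) \<longrightarrow>
        (\<exists>x\<in>carrier R. ring.eval R p x = \<zero>\<^bsub>R\<^esub>))"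

end

theory Submission
  imports Defs "HOL-Computational_Algebra.Fundamental_Theorem_Algebra"
begin

fun neval :: "'a::comm_ring_1 list \<Rightarrow> 'a \<Rightarrow> 'a" where
  "neval [] z = 0"
| "neval (a # as) z = a * z ^ length as + neval as z"

lemma neval_bound:
  fixes z :: "'a::real_normed_field"
  shows "norm (neval bs z) \<le> sum_list (map norm bs) * (max 1 (norm z)) ^ (length bs - 1)"
proof (induction bs)
  case Nil
  then show ?case by simp
next
  case (Cons b cs)
  let ?M = "max 1 (norm z)"
  have M1: "1 \<le> ?M" by simp
  have "norm (neval (b # cs) z) \<le> norm b * norm z ^ length cs + norm (neval cs z)"
    by (simp add: norm_triangle_le norm_mult norm_power)
  also have "norm z ^ length cs \<le> ?M ^ length cs"
    by (intro power_mono) auto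
  hence "norm b * norm z ^ length cs \<le> norm b * ?M ^ length cs"
    by (intro mult_left_mono) auto
  also have "norm (neval cs z) \<le> sum_list (map norm cs) * ?M ^ (length cs - 1)"
    using Cons.IH .
  also have "?M ^ (length cs - 1) \<le> ?M ^ length cs"
    using M1 by (intro power_increasing) auto
  hence "sum_list (map norm cs) * ?M ^ (length cs - 1) \<le> sum_list (map norm cs) * ?M ^ length cs"
    by (intro mult_left_mono) (auto intro!: sum_list_nonneg)
  finally show ?case by (simp add: algebra_simps)
qed

lemma neval_root_bound:
  fixes z :: "'a::real_normed_field"
  assumes a: "a \<noteq> 0" and r: "neval (a # bs) z = 0"
  shows "norm z \<le> 1 + sum_list (map norm bs) / norm a"
proof (cases "norm z \<le> 1")
  case True
  have "0 \<le> sum_list (map norm bs) / norm a" by (intro divide_nonneg_nonneg sum_list_nonneg) auto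
  then show ?thesis using True by linarith
next
  case False
  let ?S = "sum_list (map norm bs)"
  let ?n = "length bs"
  have M: "max 1 (norm z) = norm z" using False by simp
  have "bs \<noteq> []" using r a by auto
  hence n: "?n = Suc (?n - 1)" by (cases bs) auto
  have eq: "a * z ^ ?n = - neval bs z" using r by (simp add: eq_neg_iff_add_eq_0)
  have "norm a * norm z ^ ?n \<le> ?S * norm z ^ (?n - 1)"
    using neval_bound[of bs z] eq M by (metis norm_minus_cancel norm_mult norm_power)
  hence "norm a * norm z * norm z ^ (?n - 1) \<le> ?S * norm z ^ (?n - 1)"
    by (subst (asm) n) (simp add: algebra_simps)
  moreover have "0 < norm z ^ (?n - 1)" using False by (intro zero_less_power) linarith
  ultimately have "norm a * norm z \<le> ?S" by simp
  hence "norm z \<le> ?S / norm a" using a by (simp add: field_simps)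
  then show ?thesis by simp
qed

fun cpoly :: "'a::comm_ring_1 list \<Rightarrow> 'a poly" where
  "cpoly [] = 0"
| "cpoly (a # as) = Polynomial.monom a (length as) + cpoly as"

lemma poly_cpoly: "poly (cpoly as) z = neval as z"
  by (induction as) (auto simp: poly_monom)

lemma degree_cpoly: "Polynomial.degree (cpoly as) \<le> length as - 1"
proof (induction as)
  case (Cons a as)
  have "Polynomial.degree (cpoly (a # as)) \<le> max (Polynomial.degree (Polynomial.monom a (length as))) (Polynomial.degree (cpoly as))"
    by (simp add: degree_add_le_max)
  also have "\<dots> \<le> length as" using Cons.IH degree_monom_le[of a "length as"] by auto
  finally show ?case by simp
qed simp

lemma neval_complex_root:
  fixes a :: complex
  assumes "a \<noteq> 0" "bs \<noteq> []"
  shows "\<exists>z. neval (a # bs) z = 0"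
proof -
  have "Polynomial.degree (cpoly bs) < length bs"
    using degree_cpoly[of bs] assms(2) by (cases bs) auto
  hence "Polynomial.degree (cpoly (a # bs)) = length bs"
    using assms(1) by (simp add: degree_add_eq_left degree_monom_eq)
  hence d: "Polynomial.degree (cpoly (a # bs)) \<noteq> 0" using assms(2) by simp
  hence "\<not> constant (poly (cpoly (a # bs)))"
    by (subst constant_degree) (use d in simp)
  then obtain z where "poly (cpoly (a # bs)) z = 0"
    using fundamental_theorem_of_algebra by blast
  thus ?thesis by (metis poly_cpoly)
qed

lemma continuous_neval: "continuous_on S (\<lambda>x::real. neval as x)"
  by (induction as) (auto intro!: continuous_intros)

lemma neval_real_root:
  fixes a :: real
  assumes a: "a \<noteq> 0" and odd: "odd (length bs)"
  shows "\<exists>x. neval (a # bs) x = 0"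
proof -
  let ?S = "sum_list (map norm bs)"
  let ?n = "length bs"
  define T where "T = 1 + ?S / \<bar>a\<bar>"
  have S0: "0 \<le> ?S" by (intro sum_list_nonneg) auto
  have T1: "1 \<le> T" unfolding T_def using S0 by simp
  have M: "max 1 (norm t) = T" if "\<bar>t\<bar> = T" for t using that T1 by auto
  have aT0: "\<bar>a\<bar> * T = \<bar>a\<bar> + ?S" unfolding T_def using a by (simp add: distrib_left)
  have aT: "?S < \<bar>a\<bar> * T" using aT0 a by simp
  have key: "\<bar>neval bs t\<bar> < \<bar>a\<bar> * T ^ ?n" if "\<bar>t\<bar> = T" for t
  proof -
    have n: "?n = Suc (?n - 1)" using odd by (cases bs) auto
    have "\<bar>neval bs t\<bar> \<le> ?S * T ^ (?n - 1)"
      using neval_bound[of bs t] M[OF that] by simp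
    also have "\<dots> < \<bar>a\<bar> * T * T ^ (?n - 1)"
      using aT T1 by (intro mult_strict_right_mono) auto
    also have "\<dots> = \<bar>a\<bar> * T ^ ?n" by (subst (2) n) (simp add: algebra_simps)
    finally show ?thesis .
  qed
  have pT: "neval (a # bs) T = a * T ^ ?n + neval bs T" by simp
  have mT: "neval (a # bs) (-T) = - (a * T ^ ?n) + neval bs (-T)"
    using odd by (simp add: power_minus_odd)
  have k1: "\<bar>neval bs T\<bar> < \<bar>a\<bar> * T ^ ?n" using key[of T] T1 by simp
  have k2: "\<bar>neval bs (-T)\<bar> < \<bar>a\<bar> * T ^ ?n" using key[of "-T"] T1 by simp
  have le: "-T \<le> T" using T1 by simp
  show ?thesis
  proof (cases "a > 0")
    case True
    have "neval (a # bs) (-T) \<le> 0" "0 \<le> neval (a # bs) T"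
      using k1 k2 True pT mT by (auto simp: abs_less_iff)
    then show ?thesis using IVT'[OF _ _ le continuous_neval] by blast
  next
    case False
    hence an: "a < 0" using a by simp
    have "0 \<le> neval (a # bs) (-T)" "neval (a # bs) T \<le> 0"
      using k1 k2 an pT mT by (auto simp: abs_less_iff abs_of_neg)
    then show ?thesis using IVT2'[OF _ _ le continuous_neval] by blast
  qed
qed

lemma Rphi_pos:
  fixes \<phi> :: "'d::finite tf"
  assumes "\<phi> \<in> testfns" and int1: "(LINT x|lborel. \<phi> x) = 1"
  shows "0 < Rphi \<phi>"
proof -
  have nz: "\<phi> \<noteq> (\<lambda>_. 0)" using int1 by auto
  have "\<exists>x. x \<noteq> 0 \<and> \<phi> x \<noteq> 0"
  proof (rule ccontr)
    assume "\<not> ?thesis"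
    hence "AE x in lborel. \<phi> x = 0"
      using AE_lborel_singleton[of "0::real^'d"] by (auto elim: eventually_mono)
    hence "(LINT x|lborel. \<phi> x) = 0" by (rule integral_eq_zero_AE)
    thus False using int1 by simp
  qed
  then obtain x where x: "x \<noteq> 0" "\<phi> x \<noteq> 0" by blast
  have "compact (closure {x. \<phi> x \<noteq> 0})" using assms(1) by (simp add: testfns_def)
  hence "bounded {x. \<phi> x \<noteq> 0}"
    using compact_imp_bounded bounded_subset closure_subset by blast
  then obtain B where B: "\<forall>y\<in>{x. \<phi> x \<noteq> 0}. norm y \<le> B" by (auto simp: bounded_iff)
  have bdd: "bdd_above {norm x | x. \<phi> x \<noteq> 0}"
    using B by (auto intro!: bdd_aboveI)
  have "norm x \<le> Sup {norm x | x. \<phi> x \<noteq> 0}"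
    using x bdd by (auto intro!: cSup_upper)
  moreover have "0 < norm x" using x by simp
  ultimately have "0 < Sup {norm x | x. \<phi> x \<noteq> 0}" by linarith
  thus ?thesis using nz by (simp add: Rphi_def)
qed


lemma aux_half:
  fixes r x y :: real
  assumes "0 < r" "r \<le> 1/2" "x < r ^ Suc p" "y < r ^ Suc p"
  shows "x + y < r ^ p"
proof -
  have "2 * r * r ^ p \<le> 1 * r ^ p"
    using assms(1,2) by (intro mult_right_mono) auto
  thus ?thesis using assms(3,4) by simp
qed

lemma aux_mult_negl:
  fixes r a b :: real
  assumes "0 < r" "a \<le> inverse r ^ m" "b < r ^ (p + m)" "0 \<le> a" "0 \<le> b"
  shows "a * b < r ^ p"
proof -
  have "a * b \<le> inverse r ^ m * b" using assms \<open>0 \<le> b\<close> by (intro mult_right_mono) auto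
  also have "\<dots> < inverse r ^ m * r ^ (p + m)"
    using assms by (intro mult_strict_left_mono) auto
  also have "\<dots> = r ^ p" using assms(1) by (simp add: power_add field_simps power_inverse)
  finally show ?thesis .
qed

lemma aux_mod_add:
  fixes r a b :: real
  assumes "0 < r" "r \<le> 1/2" "a \<le> inverse r ^ m1" "b \<le> inverse r ^ m2"
  shows "a + b \<le> inverse r ^ Suc (m1 + m2)"
proof -
  have s2: "2 \<le> inverse r"
    using le_imp_inverse_le[OF assms(2)] assms(1) by simp
  have "inverse r ^ m1 \<le> inverse r ^ (m1 + m2)" "inverse r ^ m2 \<le> inverse r ^ (m1 + m2)"
    using s2 by (intro power_increasing; simp)+
  hence "a + b \<le> 2 * inverse r ^ (m1 + m2)" using assms by simp
  also have "\<dots> \<le> inverse r * inverse r ^ (m1 + m2)"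
    using s2 assms(1) by (intro mult_right_mono zero_le_power) auto
  finally show ?thesis by simp
qed

lemma aux_mod_mult:
  fixes s a b :: real
  assumes "a \<le> s ^ m1" "b \<le> s ^ m2" "0 \<le> a" "0 \<le> b"
  shows "a * b \<le> s ^ (m1 + m2)"
  using mult_mono[OF assms(1,2)] assms by (simp add: power_add)


lemma neval_of_real: "neval (map complex_of_real xs) (complex_of_real x) = complex_of_real (neval xs x)"
  by (induction xs) simp_all

lemma re_im_le:
  assumes "a \<in> \<real>" "b \<in> \<real>"
  shows "norm (a - complex_of_real (Re z)) \<le> norm (a + \<i> * b - z)"
    and "norm (b - complex_of_real (Im z)) \<le> norm (a + \<i> * b - z)"
proof -
  obtain ra where ra: "a = complex_of_real ra" using assms(1) by (auto elim!: Reals_cases)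
  obtain rb where rb: "b = complex_of_real rb" using assms(2) by (auto elim!: Reals_cases)
  have "norm (a - complex_of_real (Re z)) = \<bar>ra - Re z\<bar>"
    unfolding ra of_real_diff[symmetric] norm_of_real ..
  also have "\<dots> = \<bar>Re (a + \<i> * b - z)\<bar>" by (simp add: ra rb)
  also have "\<dots> \<le> norm (a + \<i> * b - z)" by (rule abs_Re_le_cmod)
  finally show "norm (a - complex_of_real (Re z)) \<le> norm (a + \<i> * b - z)" .
  have "norm (b - complex_of_real (Im z)) = \<bar>rb - Im z\<bar>"
    unfolding rb of_real_diff[symmetric] norm_of_real ..
  also have "\<dots> = \<bar>Im (a + \<i> * b - z)\<bar>" by (simp add: ra rb)
  also have "\<dots> \<le> norm (a + \<i> * b - z)" by (rule abs_Im_le_cmod)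
  finally show "norm (b - complex_of_real (Im z)) \<le> norm (a + \<i> * b - z)" .
qed

locale ctx =
  fixes U :: "'d::finite tf set set"
  assumes uf: "free_ultrafilter_on testfns U"
    and dn: "\<forall>n::nat. n \<ge> 1 \<longrightarrow> Dn n \<in> U"
begin

lemma U_testfns: "testfns \<in> U" and U_empty: "{} \<notin> U"
  and U_int: "A \<in> U \<Longrightarrow> B \<in> U \<Longrightarrow> A \<inter> B \<in> U"
  and U_mono: "A \<in> U \<Longrightarrow> A \<subseteq> B \<Longrightarrow> B \<subseteq> testfns \<Longrightarrow> B \<in> U"
  and U_ultra: "A \<subseteq> testfns \<Longrightarrow> A \<in> U \<or> testfns - A \<in> U"
  using uf unfolding free_ultrafilter_on_def by blast+

definition F :: "'d tf filter" where
  "F = Abs_filter (\<lambda>P. {\<phi>\<in>testfns. P \<phi>} \<in> U)"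

lemma eventually_F: "eventually P F \<longleftrightarrow> {\<phi>\<in>testfns. P \<phi>} \<in> U"
  unfolding F_def
proof (rule eventually_Abs_filter, rule is_filter.intro)
  show "{\<phi> \<in> testfns. True} \<in> U" using U_testfns by simp
next
  fix P Q assume PQ: "{\<phi> \<in> testfns. P \<phi>} \<in> U" "{\<phi> \<in> testfns. Q \<phi>} \<in> U"
  have "{\<phi> \<in> testfns. P \<phi> \<and> Q \<phi>} = {\<phi> \<in> testfns. P \<phi>} \<inter> {\<phi> \<in> testfns. Q \<phi>}" by auto
  with U_int[OF PQ] show "{\<phi> \<in> testfns. P \<phi> \<and> Q \<phi>} \<in> U" by simp
next
  fix P Q assume "\<forall>x. P x \<longrightarrow> Q x" "{\<phi> \<in> testfns. P \<phi>} \<in> U"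
  thus "{\<phi> \<in> testfns. Q \<phi>} \<in> U" by (elim U_mono) auto
qed

lemma F_ultra: "eventually P F \<or> eventually (\<lambda>x. \<not> P x) F"
proof -
  have "testfns - {\<phi>\<in>testfns. P \<phi>} = {\<phi>\<in>testfns. \<not> P \<phi>}" by auto
  thus ?thesis using U_ultra[of "{\<phi>\<in>testfns. P \<phi>}"] unfolding eventually_F by auto
qed

lemma F_proper: "\<not> eventually (\<lambda>_. False) F"
  using U_empty unfolding eventually_F by simp

lemma r_pos: "eventually (\<lambda>\<phi>. 0 < Rphi \<phi>) F"
proof -
  have "Dn 1 \<in> U" using dn by simp
  moreover have "Dn 1 \<subseteq> {\<phi>\<in>testfns. 0 < Rphi \<phi>}"
    by (auto simp: Dn_def intro!: Rphi_pos)
  ultimately show ?thesis unfolding eventually_F by (rule U_mono) auto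
qed

lemma r_small: "n \<ge> 1 \<Longrightarrow> eventually (\<lambda>\<phi>. Rphi \<phi> \<le> 1 / real n) F"
proof -
  assume n: "n \<ge> 1"
  have "Dn n \<in> U" using dn n by simp
  moreover have "Dn n \<subseteq> {\<phi>\<in>testfns. Rphi \<phi> \<le> 1 / real n}"
    by (auto simp: Dn_def)
  ultimately show ?thesis unfolding eventually_F by (rule U_mono) auto
qed


lemma r_half: "eventually (\<lambda>\<phi>. 0 < Rphi \<phi> \<and> Rphi \<phi> \<le> 1/2) F"
  using eventually_conj[OF r_pos r_small[of 2]] by simp

lemma mod_iff: "moderate U A \<longleftrightarrow> (\<exists>m. eventually (\<lambda>\<phi>. norm (A \<phi>) \<le> inverse (Rphi \<phi>) ^ m) F)"
  unfolding moderate_def eventually_F by (simp add: power_inverse)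

lemma negl_iff: "negligible_net U A \<longleftrightarrow> (\<forall>p. eventually (\<lambda>\<phi>. norm (A \<phi>) < Rphi \<phi> ^ p) F)"
  unfolding negligible_net_def eventually_F by simp

lemma negl_mono:
  assumes "negligible_net U B" "eventually (\<lambda>\<phi>. norm (A \<phi>) \<le> norm (B \<phi>)) F"
  shows "negligible_net U A"
  unfolding negl_iff
proof
  fix p
  have "eventually (\<lambda>\<phi>. norm (B \<phi>) < Rphi \<phi> ^ p) F" using assms(1) negl_iff by blast
  thus "eventually (\<lambda>\<phi>. norm (A \<phi>) < Rphi \<phi> ^ p) F"
    by (rule eventually_mono[OF eventually_conj[OF _ assms(2)]]) auto
qed

lemma negl_ev0:
  assumes "eventually (\<lambda>\<phi>. A \<phi> = 0) F"
  shows "negligible_net U A"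
  unfolding negl_iff
proof
  fix p show "eventually (\<lambda>\<phi>. norm (A \<phi>) < Rphi \<phi> ^ p) F"
    by (rule eventually_mono[OF eventually_conj[OF r_pos assms]]) auto
qed

lemma negl_add:
  assumes "negligible_net U A" "negligible_net U B"
  shows "negligible_net U (\<lambda>\<phi>. A \<phi> + B \<phi>)"
  unfolding negl_iff
proof
  fix p
  have a: "eventually (\<lambda>\<phi>. norm (A \<phi>) < Rphi \<phi> ^ Suc p) F" using assms(1) negl_iff by blast
  have b: "eventually (\<lambda>\<phi>. norm (B \<phi>) < Rphi \<phi> ^ Suc p) F" using assms(2) negl_iff by blast
  show "eventually (\<lambda>\<phi>. norm (A \<phi> + B \<phi>) < Rphi \<phi> ^ p) F"
  proof (rule eventually_mono[OF eventually_conj[OF r_half eventually_conj[OF a b]]])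
    fix \<phi> assume h: "(0 < Rphi \<phi> \<and> Rphi \<phi> \<le> 1 / 2) \<and> norm (A \<phi>) < Rphi \<phi> ^ Suc p \<and> norm (B \<phi>) < Rphi \<phi> ^ Suc p"
    have "norm (A \<phi> + B \<phi>) \<le> norm (A \<phi>) + norm (B \<phi>)" by (rule norm_triangle_ineq)
    also have "\<dots> < Rphi \<phi> ^ p" using h by (intro aux_half) auto
    finally show "norm (A \<phi> + B \<phi>) < Rphi \<phi> ^ p" .
  qed
qed

lemma negl_uminus: "negligible_net U A \<Longrightarrow> negligible_net U (\<lambda>\<phi>. - A \<phi>)"
  by (erule negl_mono) simp

lemma negl_sym: "negligible_net U (\<lambda>\<phi>. A \<phi> - B \<phi>) \<Longrightarrow> negligible_net U (\<lambda>\<phi>. B \<phi> - A \<phi>)"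
  by (erule negl_mono) (simp add: norm_minus_commute)

lemma negl_diff: "negligible_net U A \<Longrightarrow> negligible_net U B \<Longrightarrow> negligible_net U (\<lambda>\<phi>. A \<phi> - B \<phi>)"
  using negl_add[of A "\<lambda>\<phi>. - B \<phi>"] negl_uminus[of B] by simp

lemma negl_mult:
  assumes "moderate U A" "negligible_net U B"
  shows "negligible_net U (\<lambda>\<phi>. A \<phi> * B \<phi>)"
  unfolding negl_iff
proof
  fix p
  obtain m where m: "eventually (\<lambda>\<phi>. norm (A \<phi>) \<le> inverse (Rphi \<phi>) ^ m) F"
    using assms(1) mod_iff by blast
  have b: "eventually (\<lambda>\<phi>. norm (B \<phi>) < Rphi \<phi> ^ (p + m)) F" using assms(2) negl_iff by blast
  show "eventually (\<lambda>\<phi>. norm (A \<phi> * B \<phi>) < Rphi \<phi> ^ p) F"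
    by (rule eventually_mono[OF eventually_conj[OF r_pos eventually_conj[OF m b]]])
       (auto simp: norm_mult intro!: aux_mult_negl)
qed

lemma negl_mult2: "negligible_net U B \<Longrightarrow> moderate U A \<Longrightarrow> negligible_net U (\<lambda>\<phi>. B \<phi> * A \<phi>)"
  using negl_mult[of A B] by (simp add: mult.commute)

lemma mod_mono:
  assumes "moderate U B" "eventually (\<lambda>\<phi>. norm (A \<phi>) \<le> norm (B \<phi>)) F"
  shows "moderate U A"
proof -
  obtain m where m: "eventually (\<lambda>\<phi>. norm (B \<phi>) \<le> inverse (Rphi \<phi>) ^ m) F"
    using assms(1) mod_iff by blast
  have "eventually (\<lambda>\<phi>. norm (A \<phi>) \<le> inverse (Rphi \<phi>) ^ m) F"
    by (rule eventually_mono[OF eventually_conj[OF m assms(2)]]) auto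
  thus ?thesis using mod_iff by blast
qed

lemma negl_imp_mod: "negligible_net U A \<Longrightarrow> moderate U A"
  unfolding negl_iff mod_iff
  by (rule exI[of _ 0], erule allE[of _ 0], erule eventually_mono) simp

lemma mod_add:
  assumes "moderate U A" "moderate U B"
  shows "moderate U (\<lambda>\<phi>. A \<phi> + B \<phi>)"
proof -
  obtain m1 where m1: "eventually (\<lambda>\<phi>. norm (A \<phi>) \<le> inverse (Rphi \<phi>) ^ m1) F"
    using assms(1) mod_iff by blast
  obtain m2 where m2: "eventually (\<lambda>\<phi>. norm (B \<phi>) \<le> inverse (Rphi \<phi>) ^ m2) F"
    using assms(2) mod_iff by blast
  have "eventually (\<lambda>\<phi>. norm (A \<phi> + B \<phi>) \<le> inverse (Rphi \<phi>) ^ Suc (m1 + m2)) F"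
  proof (rule eventually_mono[OF eventually_conj[OF r_half eventually_conj[OF m1 m2]]])
    fix \<phi> assume h: "(0 < Rphi \<phi> \<and> Rphi \<phi> \<le> 1 / 2) \<and> norm (A \<phi>) \<le> inverse (Rphi \<phi>) ^ m1 \<and> norm (B \<phi>) \<le> inverse (Rphi \<phi>) ^ m2"
    have "norm (A \<phi> + B \<phi>) \<le> norm (A \<phi>) + norm (B \<phi>)" by (rule norm_triangle_ineq)
    also have "\<dots> \<le> inverse (Rphi \<phi>) ^ Suc (m1 + m2)" using h by (intro aux_mod_add) auto
    finally show "norm (A \<phi> + B \<phi>) \<le> inverse (Rphi \<phi>) ^ Suc (m1 + m2)" .
  qed
  thus ?thesis using mod_iff by blast
qed

lemma mod_mult:
  assumes "moderate U A" "moderate U B"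
  shows "moderate U (\<lambda>\<phi>. A \<phi> * B \<phi>)"
proof -
  obtain m1 where m1: "eventually (\<lambda>\<phi>. norm (A \<phi>) \<le> inverse (Rphi \<phi>) ^ m1) F"
    using assms(1) mod_iff by blast
  obtain m2 where m2: "eventually (\<lambda>\<phi>. norm (B \<phi>) \<le> inverse (Rphi \<phi>) ^ m2) F"
    using assms(2) mod_iff by blast
  have "eventually (\<lambda>\<phi>. norm (A \<phi> * B \<phi>) \<le> inverse (Rphi \<phi>) ^ (m1 + m2)) F"
    by (rule eventually_mono[OF eventually_conj[OF m1 m2]])
       (auto simp: norm_mult intro!: aux_mod_mult)
  thus ?thesis using mod_iff by blast
qed

lemma mod_const: "moderate U (\<lambda>_. c)"
proof -
  define N where "N = nat \<lceil>norm c\<rceil> + 1"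
  have N1: "N \<ge> 1" unfolding N_def by simp
  have Nc: "norm c \<le> real N" unfolding N_def by linarith
  have "eventually (\<lambda>\<phi>. norm c \<le> inverse (Rphi \<phi>) ^ 1) F"
  proof (rule eventually_mono[OF eventually_conj[OF r_pos r_small[OF N1]]])
    fix \<phi> assume h: "0 < Rphi \<phi> \<and> Rphi \<phi> \<le> 1 / real N"
    have "inverse (1 / real N) \<le> inverse (Rphi \<phi>)" using h by (intro le_imp_inverse_le) auto
    thus "norm c \<le> inverse (Rphi \<phi>) ^ 1" using Nc by simp
  qed
  thus ?thesis using mod_iff by blast
qed

lemma mod_uminus: "moderate U A \<Longrightarrow> moderate U (\<lambda>\<phi>. - A \<phi>)"
  by (erule mod_mono) simp

lemma mod_diff: "moderate U A \<Longrightarrow> moderate U B \<Longrightarrow> moderate U (\<lambda>\<phi>. A \<phi> - B \<phi>)"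
  using mod_add[of A "\<lambda>\<phi>. - B \<phi>"] mod_uminus[of B] by simp

lemma mod_inverse:
  assumes "eventually (\<lambda>\<phi>. Rphi \<phi> ^ q \<le> norm (A \<phi>)) F"
  shows "moderate U (\<lambda>\<phi>. inverse (A \<phi>))"
proof -
  have "eventually (\<lambda>\<phi>. norm (inverse (A \<phi>)) \<le> inverse (Rphi \<phi>) ^ q) F"
  proof (rule eventually_mono[OF eventually_conj[OF r_pos assms]])
    fix \<phi> assume h: "0 < Rphi \<phi> \<and> Rphi \<phi> ^ q \<le> norm (A \<phi>)"
    have "inverse (norm (A \<phi>)) \<le> inverse (Rphi \<phi> ^ q)" using h by (intro le_imp_inverse_le) auto
    thus "norm (inverse (A \<phi>)) \<le> inverse (Rphi \<phi>) ^ q" by (simp add: norm_inverse power_inverse)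
  qed
  thus ?thesis using mod_iff by blast
qed

lemma not_negl:
  assumes "\<not> negligible_net U A"
  shows "\<exists>q. eventually (\<lambda>\<phi>. Rphi \<phi> ^ q \<le> norm (A \<phi>)) F"
proof -
  obtain p where "\<not> eventually (\<lambda>\<phi>. norm (A \<phi>) < Rphi \<phi> ^ p) F" using assms negl_iff by blast
  hence "eventually (\<lambda>\<phi>. \<not> norm (A \<phi>) < Rphi \<phi> ^ p) F" using F_ultra by blast
  thus ?thesis by (intro exI[of _ p]) (auto elim: eventually_mono)
qed

lemma mod_norm: "moderate U A \<Longrightarrow> moderate U (\<lambda>\<phi>. complex_of_real (norm (A \<phi>)))"
  by (erule mod_mono) simp

lemma mod_Re: "moderate U A \<Longrightarrow> moderate U (\<lambda>\<phi>. complex_of_real (Re (A \<phi>)))"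
  by (erule mod_mono) (simp add: abs_Re_le_cmod)

lemma mod_Im: "moderate U A \<Longrightarrow> moderate U (\<lambda>\<phi>. complex_of_real (Im (A \<phi>)))"
  by (erule mod_mono) (simp add: abs_Im_le_cmod)

lemma mod_sum_norms:
  "(\<forall>A\<in>set as. moderate U A) \<Longrightarrow>
   moderate U (\<lambda>\<phi>. complex_of_real (sum_list (map (\<lambda>A. norm (A \<phi>)) as)))"
proof (induction as)
  case Nil
  then show ?case using mod_const[of 0] by simp
next
  case (Cons a as)
  then show ?case using mod_add[OF mod_norm[of a] Cons.IH] by simp
qed

lemma F_nontriv: "eventually P F \<Longrightarrow> \<exists>\<phi>. P \<phi>"
  using F_proper by (metis eventually_mono)


lemma cls_refl: "moderate U A \<Longrightarrow> A \<in> cls U A"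
  unfolding cls_def using negl_ev0[of "\<lambda>\<phi>. A \<phi> - A \<phi>"] by simp

lemma cls_eq_iff:
  assumes "moderate U A" "moderate U B"
  shows "cls U A = cls U B \<longleftrightarrow> negligible_net U (\<lambda>\<phi>. A \<phi> - B \<phi>)"
proof
  assume "cls U A = cls U B"
  hence "A \<in> cls U B" using cls_refl[OF assms(1)] by auto
  thus "negligible_net U (\<lambda>\<phi>. A \<phi> - B \<phi>)" by (simp add: cls_def)
next
  assume h: "negligible_net U (\<lambda>\<phi>. A \<phi> - B \<phi>)"
  have 1: "negligible_net U (\<lambda>\<phi>. C \<phi> - B \<phi>)" if "negligible_net U (\<lambda>\<phi>. C \<phi> - A \<phi>)" for C
    using negl_add[OF that h] by simp
  have 2: "negligible_net U (\<lambda>\<phi>. C \<phi> - A \<phi>)" if "negligible_net U (\<lambda>\<phi>. C \<phi> - B \<phi>)" for C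
    using negl_diff[OF that h] by simp
  show "cls U A = cls U B" unfolding cls_def using 1 2 by blast
qed

lemma cls_eqI: "moderate U A \<Longrightarrow> moderate U B \<Longrightarrow> eventually (\<lambda>\<phi>. A \<phi> = B \<phi>) F \<Longrightarrow> cls U A = cls U B"
  by (subst cls_eq_iff) (auto intro!: negl_ev0 elim: eventually_mono)

lemma cls_mod: "C \<in> cls U A \<Longrightarrow> moderate U C"
  by (simp add: cls_def)

lemma cls_negl: "C \<in> cls U A \<Longrightarrow> negligible_net U (\<lambda>\<phi>. C \<phi> - A \<phi>)"
  by (simp add: cls_def)

lemma carrier_Chat: "carrier (Chat U) = cls U ` {A. moderate U A}"
  by (simp add: Chat_def)

lemma one_Chat: "\<one>\<^bsub>Chat U\<^esub> = cls U (\<lambda>_. 1)" and zero_Chat: "\<zero>\<^bsub>Chat U\<^esub> = cls U (\<lambda>_. 0)"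
  by (simp_all add: Chat_def)

lemma Chat_E:
  assumes "x \<in> carrier (Chat U)"
  obtains A where "moderate U A" "x = cls U A"
  using assms by (auto simp: carrier_Chat)

lemma cls_in_carrier: "moderate U A \<Longrightarrow> cls U A \<in> carrier (Chat U)"
  by (simp add: carrier_Chat)

lemma add_cls:
  assumes A: "moderate U A" and B: "moderate U B"
  shows "cls U A \<oplus>\<^bsub>Chat U\<^esub> cls U B = cls U (\<lambda>\<phi>. A \<phi> + B \<phi>)"
proof -
  have "(\<exists>A'\<in>cls U A. \<exists>B'\<in>cls U B. negligible_net U (\<lambda>\<phi>. C \<phi> - (A' \<phi> + B' \<phi>)))
        \<longleftrightarrow> negligible_net U (\<lambda>\<phi>. C \<phi> - (A \<phi> + B \<phi>))" for C
  proof
    assume "\<exists>A'\<in>cls U A. \<exists>B'\<in>cls U B. negligible_net U (\<lambda>\<phi>. C \<phi> - (A' \<phi> + B' \<phi>))"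
    then obtain A' B' where a: "A' \<in> cls U A" and b: "B' \<in> cls U B"
      and c: "negligible_net U (\<lambda>\<phi>. C \<phi> - (A' \<phi> + B' \<phi>))" by blast
    have "negligible_net U (\<lambda>\<phi>. (C \<phi> - (A' \<phi> + B' \<phi>)) + ((A' \<phi> - A \<phi>) + (B' \<phi> - B \<phi>)))"
      by (intro negl_add c cls_negl a b)
    thus "negligible_net U (\<lambda>\<phi>. C \<phi> - (A \<phi> + B \<phi>))" by (simp add: algebra_simps)
  next
    assume "negligible_net U (\<lambda>\<phi>. C \<phi> - (A \<phi> + B \<phi>))"
    thus "\<exists>A'\<in>cls U A. \<exists>B'\<in>cls U B. negligible_net U (\<lambda>\<phi>. C \<phi> - (A' \<phi> + B' \<phi>))"
      using cls_refl[OF A] cls_refl[OF B] by blast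
  qed
  thus ?thesis by (simp add: Chat_def cls_def)
qed

lemma mult_cls:
  assumes A: "moderate U A" and B: "moderate U B"
  shows "cls U A \<otimes>\<^bsub>Chat U\<^esub> cls U B = cls U (\<lambda>\<phi>. A \<phi> * B \<phi>)"
proof -
  have "(\<exists>A'\<in>cls U A. \<exists>B'\<in>cls U B. negligible_net U (\<lambda>\<phi>. C \<phi> - A' \<phi> * B' \<phi>))
        \<longleftrightarrow> negligible_net U (\<lambda>\<phi>. C \<phi> - A \<phi> * B \<phi>)" for C
  proof
    assume "\<exists>A'\<in>cls U A. \<exists>B'\<in>cls U B. negligible_net U (\<lambda>\<phi>. C \<phi> - A' \<phi> * B' \<phi>)"
    then obtain A' B' where a: "A' \<in> cls U A" and b: "B' \<in> cls U B"
      and c: "negligible_net U (\<lambda>\<phi>. C \<phi> - A' \<phi> * B' \<phi>)" by blast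
    have n1: "negligible_net U (\<lambda>\<phi>. (A' \<phi> - A \<phi>) * B' \<phi>)"
      by (rule negl_mult2[OF cls_negl[OF a] cls_mod[OF b]])
    have n2: "negligible_net U (\<lambda>\<phi>. A \<phi> * (B' \<phi> - B \<phi>))"
      by (rule negl_mult[OF A cls_negl[OF b]])
    have "negligible_net U (\<lambda>\<phi>. (C \<phi> - A' \<phi> * B' \<phi>) + ((A' \<phi> - A \<phi>) * B' \<phi> + A \<phi> * (B' \<phi> - B \<phi>)))"
      by (rule negl_add[OF c negl_add[OF n1 n2]])
    thus "negligible_net U (\<lambda>\<phi>. C \<phi> - A \<phi> * B \<phi>)" by (simp add: algebra_simps)
  next
    assume "negligible_net U (\<lambda>\<phi>. C \<phi> - A \<phi> * B \<phi>)"
    thus "\<exists>A'\<in>cls U A. \<exists>B'\<in>cls U B. negligible_net U (\<lambda>\<phi>. C \<phi> - A' \<phi> * B' \<phi>)"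
      using cls_refl[OF A] cls_refl[OF B] by blast
  qed
  thus ?thesis by (simp add: Chat_def cls_def)
qed

lemmas mod_intros = mod_add mod_mult mod_const mod_uminus mod_diff

lemma Chat_cring: "cring (Chat U)"
proof (rule cringI)
  show "abelian_group (Chat U)"
  proof (rule abelian_groupI)
    fix x y assume "x \<in> carrier (Chat U)" "y \<in> carrier (Chat U)"
    then show "x \<oplus>\<^bsub>Chat U\<^esub> y \<in> carrier (Chat U)"
      by (auto elim!: Chat_E simp: add_cls intro!: cls_in_carrier mod_intros)
  next
    show "\<zero>\<^bsub>Chat U\<^esub> \<in> carrier (Chat U)" by (simp add: zero_Chat cls_in_carrier mod_const)
  next
    fix x y z assume "x \<in> carrier (Chat U)" "y \<in> carrier (Chat U)" "z \<in> carrier (Chat U)"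
    then show "x \<oplus>\<^bsub>Chat U\<^esub> y \<oplus>\<^bsub>Chat U\<^esub> z = x \<oplus>\<^bsub>Chat U\<^esub> (y \<oplus>\<^bsub>Chat U\<^esub> z)"
      by (auto elim!: Chat_E simp: add_cls mod_intros add.assoc)
  next
    fix x y assume "x \<in> carrier (Chat U)" "y \<in> carrier (Chat U)"
    then show "x \<oplus>\<^bsub>Chat U\<^esub> y = y \<oplus>\<^bsub>Chat U\<^esub> x"
      by (auto elim!: Chat_E simp: add_cls add.commute)
  next
    fix x assume "x \<in> carrier (Chat U)"
    then show "\<zero>\<^bsub>Chat U\<^esub> \<oplus>\<^bsub>Chat U\<^esub> x = x"
      by (auto elim!: Chat_E simp: add_cls zero_Chat mod_const)
  next
    fix x assume "x \<in> carrier (Chat U)"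
    then obtain A where A: "moderate U A" "x = cls U A" by (rule Chat_E)
    have "cls U (\<lambda>\<phi>. - A \<phi>) \<oplus>\<^bsub>Chat U\<^esub> x = \<zero>\<^bsub>Chat U\<^esub>"
      using A by (simp add: add_cls mod_uminus zero_Chat)
    moreover have "cls U (\<lambda>\<phi>. - A \<phi>) \<in> carrier (Chat U)" using A by (simp add: cls_in_carrier mod_uminus)
    ultimately show "\<exists>y\<in>carrier (Chat U). y \<oplus>\<^bsub>Chat U\<^esub> x = \<zero>\<^bsub>Chat U\<^esub>" by blast
  qed
next
  show "comm_monoid (Chat U)"
  proof (rule comm_monoidI)
    fix x y assume "x \<in> carrier (Chat U)" "y \<in> carrier (Chat U)"
    then show "x \<otimes>\<^bsub>Chat U\<^esub> y \<in> carrier (Chat U)"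
      by (auto elim!: Chat_E simp: mult_cls intro!: cls_in_carrier mod_intros)
  next
    show "\<one>\<^bsub>Chat U\<^esub> \<in> carrier (Chat U)" by (simp add: one_Chat cls_in_carrier mod_const)
  next
    fix x y z assume "x \<in> carrier (Chat U)" "y \<in> carrier (Chat U)" "z \<in> carrier (Chat U)"
    then show "x \<otimes>\<^bsub>Chat U\<^esub> y \<otimes>\<^bsub>Chat U\<^esub> z = x \<otimes>\<^bsub>Chat U\<^esub> (y \<otimes>\<^bsub>Chat U\<^esub> z)"
      by (auto elim!: Chat_E simp: mult_cls mod_intros mult.assoc)
  next
    fix x assume "x \<in> carrier (Chat U)"
    then show "\<one>\<^bsub>Chat U\<^esub> \<otimes>\<^bsub>Chat U\<^esub> x = x"
      by (auto elim!: Chat_E simp: mult_cls one_Chat mod_const)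
  next
    fix x y assume "x \<in> carrier (Chat U)" "y \<in> carrier (Chat U)"
    then show "x \<otimes>\<^bsub>Chat U\<^esub> y = y \<otimes>\<^bsub>Chat U\<^esub> x"
      by (auto elim!: Chat_E simp: mult_cls mult.commute)
  qed
next
  fix x y z assume "x \<in> carrier (Chat U)" "y \<in> carrier (Chat U)" "z \<in> carrier (Chat U)"
  then show "(x \<oplus>\<^bsub>Chat U\<^esub> y) \<otimes>\<^bsub>Chat U\<^esub> z = x \<otimes>\<^bsub>Chat U\<^esub> z \<oplus>\<^bsub>Chat U\<^esub> y \<otimes>\<^bsub>Chat U\<^esub> z"
    by (auto elim!: Chat_E simp: mult_cls add_cls mod_intros distrib_right)
qed

lemma one_ne_zero: "cls U (\<lambda>_. 1) \<noteq> cls U (\<lambda>_. 0)"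
proof
  assume "cls U (\<lambda>_. 1) = cls U (\<lambda>_. 0)"
  hence "negligible_net U (\<lambda>_. 1)" by (subst (asm) cls_eq_iff) (auto intro: mod_const)
  hence "\<forall>p. eventually (\<lambda>\<phi>. norm (1::complex) < Rphi \<phi> ^ p) F" using negl_iff[of "\<lambda>_. 1"] by simp
  from this[rule_format, of 0] have "eventually (\<lambda>\<phi>. False) F" by simp
  thus False using F_proper by simp
qed

lemma cls_inverse:
  assumes A: "moderate U A" and nz: "cls U A \<noteq> cls U (\<lambda>_. 0)"
  shows "moderate U (\<lambda>\<phi>. inverse (A \<phi>))"
    and "cls U A \<otimes>\<^bsub>Chat U\<^esub> cls U (\<lambda>\<phi>. inverse (A \<phi>)) = \<one>\<^bsub>Chat U\<^esub>"
proof -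
  have "\<not> negligible_net U A" using nz cls_eq_iff[OF A mod_const[of 0]] by simp
  then obtain q where q: "eventually (\<lambda>\<phi>. Rphi \<phi> ^ q \<le> norm (A \<phi>)) F" using not_negl by blast
  show mi: "moderate U (\<lambda>\<phi>. inverse (A \<phi>))" by (rule mod_inverse[OF q])
  have "eventually (\<lambda>\<phi>. A \<phi> * inverse (A \<phi>) = 1) F"
  proof (rule eventually_mono[OF eventually_conj[OF r_pos q]])
    fix \<phi> assume h: "0 < Rphi \<phi> \<and> Rphi \<phi> ^ q \<le> norm (A \<phi>)"
    hence "0 < norm (A \<phi>)" by (meson less_le_trans zero_less_power)
    thus "A \<phi> * inverse (A \<phi>) = 1" by simp
  qed
  thus "cls U A \<otimes>\<^bsub>Chat U\<^esub> cls U (\<lambda>\<phi>. inverse (A \<phi>)) = \<one>\<^bsub>Chat U\<^esub>"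
    by (simp add: mult_cls A mi one_Chat cls_eqI mod_intros)
qed

lemma Chat_field: "field (Chat U)"
proof (rule cring.field_intro2[OF Chat_cring])
  show "\<zero>\<^bsub>Chat U\<^esub> \<noteq> \<one>\<^bsub>Chat U\<^esub>" using one_ne_zero by (simp add: one_Chat zero_Chat)
next
  fix x assume "x \<in> carrier (Chat U) - {\<zero>\<^bsub>Chat U\<^esub>}"
  then obtain A where A: "moderate U A" "x = cls U A" and nz: "cls U A \<noteq> cls U (\<lambda>_. 0)"
    by (auto elim!: Chat_E simp: zero_Chat)
  note inv = cls_inverse[OF A(1) nz]
  have "cls U (\<lambda>\<phi>. inverse (A \<phi>)) \<otimes>\<^bsub>Chat U\<^esub> cls U A = \<one>\<^bsub>Chat U\<^esub>"
    using inv A(1) by (metis cring.cring_simprules(14) Chat_cring cls_in_carrier)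
  thus "x \<in> Units (Chat U)"
    using inv A by (auto simp: Units_def cls_in_carrier)
qed


lemma mod_pow: "moderate U Z \<Longrightarrow> moderate U (\<lambda>\<phi>. Z \<phi> ^ n)"
  by (induction n) (auto intro: mod_const mod_mult)

interpretation C: field "Chat U" by (rule Chat_field)

lemma pow_cls: "moderate U Z \<Longrightarrow> cls U Z [^]\<^bsub>Chat U\<^esub> n = cls U (\<lambda>\<phi>. Z \<phi> ^ n)"
  by (induction n) (simp_all add: one_Chat mult_cls mod_pow mult.commute)

lemma mod_neval:
  "(\<forall>A\<in>set as. moderate U A) \<Longrightarrow> moderate U Z \<Longrightarrow> moderate U (\<lambda>\<phi>. neval (map (\<lambda>A. A \<phi>) as) (Z \<phi>))"
  by (induction as) (auto intro!: mod_const mod_add mod_mult mod_pow)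

lemma eval_cls:
  "(\<forall>A\<in>set as. moderate U A) \<Longrightarrow> moderate U Z \<Longrightarrow>
   C.eval (map (cls U) as) (cls U Z) = cls U (\<lambda>\<phi>. neval (map (\<lambda>A. A \<phi>) as) (Z \<phi>))"
proof (induction as)
  case Nil
  then show ?case by (simp add: zero_Chat)
next
  case (Cons a as)
  have "C.eval (map (cls U) (a # as)) (cls U Z)
      = cls U a \<otimes>\<^bsub>Chat U\<^esub> cls U Z [^]\<^bsub>Chat U\<^esub> length as \<oplus>\<^bsub>Chat U\<^esub> C.eval (map (cls U) as) (cls U Z)"
    by simp
  also have "\<dots> = cls U (\<lambda>\<phi>. neval (map (\<lambda>A. A \<phi>) (a # as)) (Z \<phi>))"
    using Cons by (simp add: pow_cls mult_cls add_cls mod_pow mod_mult mod_neval)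
  finally show ?case .
qed

lemma root_net:
  fixes A0 :: "'d net" and T :: "complex set"
  assumes A0: "moderate U A0" and nn: "\<not> negligible_net U A0" and Bs: "\<forall>B\<in>set Bs. moderate U B"
    and T0: "0 \<in> T"
    and ex: "\<And>\<phi>. A0 \<phi> \<noteq> 0 \<Longrightarrow> \<exists>z\<in>T. neval (A0 \<phi> # map (\<lambda>B. B \<phi>) Bs) z = 0"
  shows "\<exists>Z. moderate U Z \<and> (\<forall>\<phi>. Z \<phi> \<in> T) \<and> C.eval (map (cls U) (A0 # Bs)) (cls U Z) = \<zero>\<^bsub>Chat U\<^esub>"
proof -
  define P where "P \<phi> z \<longleftrightarrow> z \<in> T \<and> neval (A0 \<phi> # map (\<lambda>B. B \<phi>) Bs) z = 0" for \<phi> z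
  define Z where "Z \<phi> = (if A0 \<phi> \<noteq> 0 then (SOME z. P \<phi> z) else 0)" for \<phi>
  have XP: "P \<phi> (Z \<phi>)" if nz0: "A0 \<phi> \<noteq> 0" for \<phi>
  proof -
    obtain z where "P \<phi> z" using ex[OF nz0] by (auto simp: P_def)
    hence "P \<phi> (SOME z. P \<phi> z)" by (rule someI)
    thus ?thesis using nz0 by (simp add: Z_def)
  qed
  have XT: "Z \<phi> \<in> T" for \<phi>
    using XP[of \<phi>] T0 by (cases "A0 \<phi> \<noteq> 0") (auto simp: P_def Z_def)
  obtain q where q: "eventually (\<lambda>\<phi>. Rphi \<phi> ^ q \<le> norm (A0 \<phi>)) F" using not_negl[OF nn] by blast
  have good: "eventually (\<lambda>\<phi>. A0 \<phi> \<noteq> 0) F"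
    by (rule eventually_mono[OF eventually_conj[OF r_pos q]])
       (metis less_le_trans norm_zero zero_less_power order.irrefl)
  define S where "S \<phi> = sum_list (map (\<lambda>B. norm (B \<phi>)) Bs)" for \<phi>
  define Y where "Y \<phi> = 1 + complex_of_real (S \<phi>) * complex_of_real (norm (inverse (A0 \<phi>)))" for \<phi>
  have mY: "moderate U Y"
    unfolding Y_def S_def
    by (intro mod_add mod_mult mod_const mod_sum_norms mod_norm mod_inverse[OF q] Bs)
  have S0: "0 \<le> S \<phi>" for \<phi> unfolding S_def by (intro sum_list_nonneg) auto
  have "eventually (\<lambda>\<phi>. norm (Z \<phi>) \<le> norm (Y \<phi>)) F"
  proof (rule eventually_mono[OF good])
    fix \<phi> assume nz: "A0 \<phi> \<noteq> 0"
    have "norm (Z \<phi>) \<le> 1 + sum_list (map norm (map (\<lambda>B. B \<phi>) Bs)) / norm (A0 \<phi>)"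
      using neval_root_bound[OF nz, of "map (\<lambda>B. B \<phi>) Bs" "Z \<phi>"] XP[OF nz] by (simp add: P_def)
    also have "\<dots> = 1 + S \<phi> * norm (inverse (A0 \<phi>))"
      by (simp add: S_def o_def norm_inverse divide_inverse)
    also have "\<dots> = norm (Y \<phi>)"
    proof -
      have "Y \<phi> = complex_of_real (1 + S \<phi> * norm (inverse (A0 \<phi>)))" by (simp add: Y_def)
      moreover have "0 \<le> 1 + S \<phi> * norm (inverse (A0 \<phi>))" using S0[of \<phi>] by simp
      ultimately show ?thesis by (simp only: norm_of_real)
    qed
    finally show "norm (Z \<phi>) \<le> norm (Y \<phi>)" .
  qed
  hence mX: "moderate U Z" by (rule mod_mono[OF mY])
  have "C.eval (map (cls U) (A0 # Bs)) (cls U Z) = cls U (\<lambda>\<phi>. neval (map (\<lambda>A. A \<phi>) (A0 # Bs)) (Z \<phi>))"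
    using A0 Bs mX by (intro eval_cls) auto
  also have "\<dots> = cls U (\<lambda>_. 0)"
  proof (rule cls_eqI)
    show "moderate U (\<lambda>\<phi>. neval (map (\<lambda>A. A \<phi>) (A0 # Bs)) (Z \<phi>))"
      using A0 Bs mX by (intro mod_neval) auto
    show "eventually (\<lambda>\<phi>. neval (map (\<lambda>A. A \<phi>) (A0 # Bs)) (Z \<phi>) = 0) F"
      by (rule eventually_mono[OF good]) (use XP in \<open>simp add: P_def\<close>)
  qed (rule mod_const)
  finally show ?thesis using mX XT zero_Chat by auto
qed

definition rep :: "'d net set \<Rightarrow> 'd net" where
  "rep x = (SOME A. moderate U A \<and> x = cls U A)"

lemma rep: "x \<in> carrier (Chat U) \<Longrightarrow> moderate U (rep x) \<and> x = cls U (rep x)"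
proof -
  assume "x \<in> carrier (Chat U)"
  then obtain A where "moderate U A" "x = cls U A" by (rule Chat_E)
  thus ?thesis unfolding rep_def using someI[of "\<lambda>A. moderate U A \<and> x = cls U A" A] by blast
qed

lemma map_rep: "set p \<subseteq> carrier (Chat U) \<Longrightarrow> map (cls U) (map rep p) = p"
  by (induction p) (auto dest: rep)

lemma nonzero_not_negl: "moderate U A \<Longrightarrow> cls U A \<noteq> \<zero>\<^bsub>Chat U\<^esub> \<Longrightarrow> \<not> negligible_net U A"
  using cls_eq_iff[of A "\<lambda>_. 0"] mod_const[of 0] by (simp add: zero_Chat)

lemma Chat_alg_closed: "algebraically_closed (Chat U)"
proof (rule C.algebraically_closedI)
  fix p assume p: "p \<in> carrier (poly_ring (Chat U))" and dp: "Polynomials.degree p > 1"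
  hence pol: "polynomial\<^bsub>Chat U\<^esub> (carrier (Chat U)) p" by (simp add: univ_poly_carrier)
  obtain x0 xs where p_eq: "p = x0 # xs" using dp by (cases p) auto
  have sp: "set p \<subseteq> carrier (Chat U)" and hd: "x0 \<noteq> \<zero>\<^bsub>Chat U\<^esub>"
    using pol p_eq by (auto simp: polynomial_def)
  define A0 where "A0 = rep x0"
  define Bs where "Bs = map rep xs"
  have A0: "moderate U A0" "x0 = cls U A0" using rep[of x0] sp p_eq by (auto simp: A0_def)
  have Bs: "\<forall>B\<in>set Bs. moderate U B" using rep sp p_eq by (auto simp: Bs_def)
  have pm: "p = map (cls U) (A0 # Bs)" using map_rep[OF sp] p_eq by (simp add: A0_def Bs_def)
  have Bne: "Bs \<noteq> []" using dp p_eq by (auto simp: Bs_def)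
  have nn: "\<not> negligible_net U A0" using nonzero_not_negl A0 hd by simp
  have ex: "\<exists>z\<in>UNIV. neval (A0 \<phi> # map (\<lambda>B. B \<phi>) Bs) z = 0" if "A0 \<phi> \<noteq> 0" for \<phi>
    using neval_complex_root[OF that, of "map (\<lambda>B. B \<phi>) Bs"] Bne by simp
  obtain Z where Z: "moderate U Z" "C.eval (map (cls U) (A0 # Bs)) (cls U Z) = \<zero>\<^bsub>Chat U\<^esub>"
    using root_net[OF A0(1) nn Bs _ ex] by blast
  show "\<exists>x\<in>carrier (Chat U). C.eval p x = \<zero>\<^bsub>Chat U\<^esub>"
    using Z pm cls_in_carrier by blast
qed


lemma Rhat_E:
  assumes "x \<in> Rhat U"
  obtains A where "moderate U A" "\<forall>\<phi>. A \<phi> \<in> \<real>" "x = cls U A"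
  using assms by (auto simp: Rhat_def)

lemma cls_in_Rhat: "moderate U A \<Longrightarrow> \<forall>\<phi>. A \<phi> \<in> \<real> \<Longrightarrow> cls U A \<in> Rhat U"
  by (auto simp: Rhat_def)

lemma Rhat_sub: "Rhat U \<subseteq> carrier (Chat U)"
  by (auto simp: Rhat_def carrier_Chat)

lemma minus_cls: "moderate U A \<Longrightarrow> \<ominus>\<^bsub>Chat U\<^esub> cls U A = cls U (\<lambda>\<phi>. - A \<phi>)"
  by (rule C.minus_equality) (simp_all add: add_cls mod_uminus zero_Chat cls_in_carrier)

lemma inv_cls: "moderate U A \<Longrightarrow> cls U A \<noteq> cls U (\<lambda>_. 0) \<Longrightarrow>
  inv\<^bsub>Chat U\<^esub> cls U A = cls U (\<lambda>\<phi>. inverse (A \<phi>))"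
  using cls_inverse[of A] by (intro C.comm_inv_char) (auto simp: cls_in_carrier)

lemma Rhat_subring: "subring (Rhat U) (Chat U)"
proof (rule C.subringI)
  show "Rhat U \<subseteq> carrier (Chat U)" by (rule Rhat_sub)
  show "\<one>\<^bsub>Chat U\<^esub> \<in> Rhat U" by (simp add: one_Chat cls_in_Rhat mod_const)
next
  fix h assume "h \<in> Rhat U"
  then show "\<ominus>\<^bsub>Chat U\<^esub> h \<in> Rhat U"
    by (auto elim!: Rhat_E simp: minus_cls intro!: cls_in_Rhat mod_uminus)
next
  fix h1 h2 assume "h1 \<in> Rhat U" "h2 \<in> Rhat U"
  then show "h1 \<otimes>\<^bsub>Chat U\<^esub> h2 \<in> Rhat U"
    by (auto elim!: Rhat_E simp: mult_cls intro!: cls_in_Rhat mod_mult)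
next
  fix h1 h2 assume "h1 \<in> Rhat U" "h2 \<in> Rhat U"
  then show "h1 \<oplus>\<^bsub>Chat U\<^esub> h2 \<in> Rhat U"
    by (auto elim!: Rhat_E simp: add_cls intro!: cls_in_Rhat mod_add)
qed

lemma Rhat_subfield: "subfield (Rhat U) (Chat U)"
proof (rule C.subfieldI'[OF Rhat_subring])
  fix k assume "k \<in> Rhat U - {\<zero>\<^bsub>Chat U\<^esub>}"
  then obtain A where A: "moderate U A" "\<forall>\<phi>. A \<phi> \<in> \<real>" "k = cls U A" and nz: "cls U A \<noteq> cls U (\<lambda>_. 0)"
    by (auto elim!: Rhat_E simp: zero_Chat)
  show "inv\<^bsub>Chat U\<^esub> k \<in> Rhat U"
    using A nz cls_inverse(1)[OF A(1) nz] by (simp add: inv_cls cls_in_Rhat)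
qed

interpretation RR: field "(Chat U)\<lparr>carrier := Rhat U\<rparr>"
  by (rule C.subfield_iff(2)[OF Rhat_subfield])

lemma sos_aux:
  "f \<in> {..<(m::nat)} \<rightarrow> Rhat U \<Longrightarrow> \<exists>S. moderate U S \<and> (\<forall>\<phi>. S \<phi> \<in> \<real> \<and> 0 \<le> Re (S \<phi>)) \<and>
     finsum ((Chat U)\<lparr>carrier := Rhat U\<rparr>) (\<lambda>k. f k \<otimes>\<^bsub>(Chat U)\<lparr>carrier := Rhat U\<rparr>\<^esub> f k) {..<m} = cls U S"
proof (induction m)
  case 0
  show ?case using mod_const[of 0] by (intro exI[of _ "\<lambda>_. 0"]) (simp add: zero_Chat)
next
  case (Suc m)
  have "f \<in> {..<m} \<rightarrow> Rhat U" using Suc.prems by auto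
  then obtain S where S: "moderate U S" "\<forall>\<phi>. S \<phi> \<in> \<real> \<and> 0 \<le> Re (S \<phi>)"
    "finsum ((Chat U)\<lparr>carrier := Rhat U\<rparr>) (\<lambda>k. f k \<otimes>\<^bsub>(Chat U)\<lparr>carrier := Rhat U\<rparr>\<^esub> f k) {..<m} = cls U S"
    using Suc.IH by auto
  have fm: "f m \<in> Rhat U" using Suc.prems by auto
  then obtain Fm where Fm: "moderate U Fm" "\<forall>\<phi>. Fm \<phi> \<in> \<real>" "f m = cls U Fm" by (rule Rhat_E)
  have cl: "(\<lambda>k. f k \<otimes>\<^bsub>(Chat U)\<lparr>carrier := Rhat U\<rparr>\<^esub> f k) \<in> {..<m} \<rightarrow> carrier ((Chat U)\<lparr>carrier := Rhat U\<rparr>)"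
  proof
    fix k assume "k \<in> {..<m}"
    hence fk: "f k \<in> carrier ((Chat U)\<lparr>carrier := Rhat U\<rparr>)" using Suc.prems by auto
    show "f k \<otimes>\<^bsub>(Chat U)\<lparr>carrier := Rhat U\<rparr>\<^esub> f k \<in> carrier ((Chat U)\<lparr>carrier := Rhat U\<rparr>)"
      using RR.m_closed[OF fk fk] .
  qed
  have cm: "f m \<otimes>\<^bsub>(Chat U)\<lparr>carrier := Rhat U\<rparr>\<^esub> f m \<in> carrier ((Chat U)\<lparr>carrier := Rhat U\<rparr>)"
    using RR.m_closed[of "f m" "f m"] fm by simp
  have "finsum ((Chat U)\<lparr>carrier := Rhat U\<rparr>) (\<lambda>k. f k \<otimes>\<^bsub>(Chat U)\<lparr>carrier := Rhat U\<rparr>\<^esub> f k) {..<Suc m}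
      = (f m \<otimes>\<^bsub>(Chat U)\<lparr>carrier := Rhat U\<rparr>\<^esub> f m) \<oplus>\<^bsub>(Chat U)\<lparr>carrier := Rhat U\<rparr>\<^esub>
        finsum ((Chat U)\<lparr>carrier := Rhat U\<rparr>) (\<lambda>k. f k \<otimes>\<^bsub>(Chat U)\<lparr>carrier := Rhat U\<rparr>\<^esub> f k) {..<m}"
    unfolding lessThan_Suc by (rule RR.finsum_insert[OF _ _ cl cm]) auto
  also have "\<dots> = cls U (\<lambda>\<phi>. Fm \<phi> * Fm \<phi> + S \<phi>)"
    using S Fm by (simp add: mult_cls add_cls mod_mult)
  finally have eq: "finsum ((Chat U)\<lparr>carrier := Rhat U\<rparr>) (\<lambda>k. f k \<otimes>\<^bsub>(Chat U)\<lparr>carrier := Rhat U\<rparr>\<^esub> f k) {..<Suc m} = cls U (\<lambda>\<phi>. Fm \<phi> * Fm \<phi> + S \<phi>)" .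
  have re: "(\<lambda>\<phi>. Fm \<phi> * Fm \<phi> + S \<phi>) \<phi> \<in> \<real> \<and> 0 \<le> Re ((\<lambda>\<phi>. Fm \<phi> * Fm \<phi> + S \<phi>) \<phi>)" for \<phi>
  proof -
    obtain x where x: "Fm \<phi> = of_real x" using Fm(2) by (auto elim!: Reals_cases)
    show ?thesis using S(2) x by auto
  qed
  show ?case using eq re S(1) Fm(1) by (intro exI[of _ "\<lambda>\<phi>. Fm \<phi> * Fm \<phi> + S \<phi>"]) (auto intro!: mod_add mod_mult)
qed

lemma formally_real:
  assumes f: "f \<in> {..<(n::nat)} \<rightarrow> carrier ((Chat U)\<lparr>carrier := Rhat U\<rparr>)"
  shows "finsum ((Chat U)\<lparr>carrier := Rhat U\<rparr>) (\<lambda>k. f k \<otimes>\<^bsub>(Chat U)\<lparr>carrier := Rhat U\<rparr>\<^esub> f k) {..<n}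
         \<noteq> \<ominus>\<^bsub>(Chat U)\<lparr>carrier := Rhat U\<rparr>\<^esub> \<one>\<^bsub>(Chat U)\<lparr>carrier := Rhat U\<rparr>\<^esub>"
proof
  obtain S where S: "moderate U S" "\<forall>\<phi>. S \<phi> \<in> \<real> \<and> 0 \<le> Re (S \<phi>)"
    "finsum ((Chat U)\<lparr>carrier := Rhat U\<rparr>) (\<lambda>k. f k \<otimes>\<^bsub>(Chat U)\<lparr>carrier := Rhat U\<rparr>\<^esub> f k) {..<n} = cls U S"
    using sos_aux[of f n] f by auto
  assume "finsum ((Chat U)\<lparr>carrier := Rhat U\<rparr>) (\<lambda>k. f k \<otimes>\<^bsub>(Chat U)\<lparr>carrier := Rhat U\<rparr>\<^esub> f k) {..<n}
         = \<ominus>\<^bsub>(Chat U)\<lparr>carrier := Rhat U\<rparr>\<^esub> \<one>\<^bsub>(Chat U)\<lparr>carrier := Rhat U\<rparr>\<^esub>"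
  hence "cls U S \<oplus>\<^bsub>(Chat U)\<lparr>carrier := Rhat U\<rparr>\<^esub> \<one>\<^bsub>(Chat U)\<lparr>carrier := Rhat U\<rparr>\<^esub> = \<zero>\<^bsub>(Chat U)\<lparr>carrier := Rhat U\<rparr>\<^esub>"
    using S(3) RR.l_neg[OF RR.one_closed] by simp
  hence "cls U (\<lambda>\<phi>. S \<phi> + 1) = cls U (\<lambda>_. 0)"
    using S(1) by (simp add: add_cls one_Chat zero_Chat mod_const)
  moreover have mS1: "moderate U (\<lambda>\<phi>. S \<phi> + 1)" by (intro mod_add S(1) mod_const)
  ultimately have "negligible_net U (\<lambda>\<phi>. S \<phi> + 1 - 0)"
    using cls_eq_iff[OF mS1 mod_const[of 0]] by blast
  hence "\<forall>p. eventually (\<lambda>\<phi>. norm (S \<phi> + 1 - 0) < Rphi \<phi> ^ p) F" using negl_iff[of "\<lambda>\<phi>. S \<phi> + 1 - 0"] by simp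
  from this[rule_format, of 0] have ev: "eventually (\<lambda>\<phi>. norm (S \<phi> + 1) < 1) F" by simp
  have "eventually (\<lambda>\<phi>. False) F"
  proof (rule eventually_mono[OF ev])
    fix \<phi> assume h: "norm (S \<phi> + 1) < 1"
    have "Re (S \<phi> + 1) \<le> norm (S \<phi> + 1)" by (rule complex_Re_le_cmod)
    moreover have "0 \<le> Re (S \<phi>)" using S(2) by blast
    ultimately show False using h by simp
  qed
  thus False using F_proper by simp
qed

lemma sqrt_le_aux: "sqrt \<bar>y\<bar> \<le> 1 + \<bar>y::real\<bar>"
proof -
  have "\<bar>y\<bar> \<le> (1 + \<bar>y\<bar>)^2" by (simp add: power2_eq_square algebra_simps)
  hence "sqrt \<bar>y\<bar> \<le> sqrt ((1 + \<bar>y\<bar>)^2)" by (rule real_sqrt_le_mono)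
  thus ?thesis by simp
qed

lemma squares:
  assumes "a \<in> Rhat U"
  shows "\<exists>b\<in>Rhat U. b \<otimes>\<^bsub>(Chat U)\<lparr>carrier := Rhat U\<rparr>\<^esub> b = a \<or>
            b \<otimes>\<^bsub>(Chat U)\<lparr>carrier := Rhat U\<rparr>\<^esub> b = \<ominus>\<^bsub>(Chat U)\<lparr>carrier := Rhat U\<rparr>\<^esub> a"
proof -
  obtain A where A: "moderate U A" "\<forall>\<phi>. A \<phi> \<in> \<real>" "a = cls U A" using assms by (rule Rhat_E)
  define B where "B \<phi> = complex_of_real (sqrt \<bar>Re (A \<phi>)\<bar>)" for \<phi>
  have m1: "moderate U (\<lambda>\<phi>. 1 + complex_of_real (norm (A \<phi>)))" by (intro mod_add mod_const mod_norm A)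
  have "eventually (\<lambda>\<phi>. norm (B \<phi>) \<le> norm (1 + complex_of_real (norm (A \<phi>)))) F"
  proof -
    show "eventually (\<lambda>\<phi>. norm (B \<phi>) \<le> norm (1 + complex_of_real (norm (A \<phi>)))) F"
    proof (rule always_eventually, rule allI)
      fix \<phi>
      have "norm (B \<phi>) = sqrt \<bar>Re (A \<phi>)\<bar>" by (simp add: B_def)
      also have "\<dots> \<le> 1 + \<bar>Re (A \<phi>)\<bar>" by (rule sqrt_le_aux)
      also have "\<dots> \<le> 1 + norm (A \<phi>)" using abs_Re_le_cmod by simp
      also have "\<dots> = norm (1 + complex_of_real (norm (A \<phi>)))"
      proof -
        have "1 + complex_of_real (norm (A \<phi>)) = complex_of_real (1 + norm (A \<phi>))" by simp
        also have "norm \<dots> = 1 + norm (A \<phi>)" by (simp only: norm_of_real) simp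
        finally show ?thesis by simp
      qed
      finally show "norm (B \<phi>) \<le> norm (1 + complex_of_real (norm (A \<phi>)))" .
    qed
  qed
  hence mB: "moderate U B" by (rule mod_mono[OF m1])
  have BR: "\<forall>\<phi>. B \<phi> \<in> \<real>" by (simp add: B_def)
  have BB: "B \<phi> * B \<phi> = complex_of_real \<bar>Re (A \<phi>)\<bar>" for \<phi>
    by (simp add: B_def flip: of_real_mult)
  have b: "cls U B \<in> Rhat U" using mB BR by (rule cls_in_Rhat)
  have bb: "cls U B \<otimes>\<^bsub>(Chat U)\<lparr>carrier := Rhat U\<rparr>\<^esub> cls U B = cls U (\<lambda>\<phi>. B \<phi> * B \<phi>)"
    using mB by (simp add: mult_cls)
  have Aeq: "A \<phi> = complex_of_real (Re (A \<phi>))" for \<phi> using A(2) by simp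
  from F_ultra[of "\<lambda>\<phi>. 0 \<le> Re (A \<phi>)"] show ?thesis
  proof
    assume ev: "eventually (\<lambda>\<phi>. 0 \<le> Re (A \<phi>)) F"
    have "cls U (\<lambda>\<phi>. B \<phi> * B \<phi>) = cls U A"
    proof (rule cls_eqI)
      show "moderate U (\<lambda>\<phi>. B \<phi> * B \<phi>)" by (rule mod_mult[OF mB mB])
      show "eventually (\<lambda>\<phi>. B \<phi> * B \<phi> = A \<phi>) F"
      proof (rule eventually_mono[OF ev])
        fix \<phi> assume h: "0 \<le> Re (A \<phi>)"
        have "B \<phi> * B \<phi> = complex_of_real (Re (A \<phi>))" using BB[of \<phi>] h by simp
        thus "B \<phi> * B \<phi> = A \<phi>" using A(2) by simp
      qed
    qed (rule A(1))
    thus ?thesis using b bb A(3) by auto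
  next
    assume ev: "eventually (\<lambda>\<phi>. \<not> 0 \<le> Re (A \<phi>)) F"
    have "cls U (\<lambda>\<phi>. B \<phi> * B \<phi>) = cls U (\<lambda>\<phi>. - A \<phi>)"
    proof (rule cls_eqI)
      show "moderate U (\<lambda>\<phi>. B \<phi> * B \<phi>)" by (rule mod_mult[OF mB mB])
      show "moderate U (\<lambda>\<phi>. - A \<phi>)" using A(1) by (rule mod_uminus)
      show "eventually (\<lambda>\<phi>. B \<phi> * B \<phi> = - A \<phi>) F"
      proof (rule eventually_mono[OF ev])
        fix \<phi> assume h: "\<not> 0 \<le> Re (A \<phi>)"
        have "B \<phi> * B \<phi> = - complex_of_real (Re (A \<phi>))" using BB[of \<phi>] h by simp
        thus "B \<phi> * B \<phi> = - A \<phi>" using A(2) by simp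
      qed
    qed
    moreover have "\<ominus>\<^bsub>(Chat U)\<lparr>carrier := Rhat U\<rparr>\<^esub> a = cls U (\<lambda>\<phi>. - A \<phi>)"
    proof (rule RR.minus_equality)
      show "cls U (\<lambda>\<phi>. - A \<phi>) \<oplus>\<^bsub>(Chat U)\<lparr>carrier := Rhat U\<rparr>\<^esub> a = \<zero>\<^bsub>(Chat U)\<lparr>carrier := Rhat U\<rparr>\<^esub>"
        using A by (simp add: add_cls mod_uminus zero_Chat)
      show "a \<in> carrier ((Chat U)\<lparr>carrier := Rhat U\<rparr>)" using assms by simp
      show "cls U (\<lambda>\<phi>. - A \<phi>) \<in> carrier ((Chat U)\<lparr>carrier := Rhat U\<rparr>)"
        using A by (simp add: cls_in_Rhat mod_uminus)
    qed
    ultimately show ?thesis using b bb by auto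
  qed
qed


definition rrep :: "'d net set \<Rightarrow> 'd net" where
  "rrep x = (SOME A. moderate U A \<and> (\<forall>\<phi>. A \<phi> \<in> \<real>) \<and> x = cls U A)"

lemma rrep: "x \<in> Rhat U \<Longrightarrow> moderate U (rrep x) \<and> (\<forall>\<phi>. rrep x \<phi> \<in> \<real>) \<and> x = cls U (rrep x)"
proof -
  assume "x \<in> Rhat U"
  then obtain A where "moderate U A" "\<forall>\<phi>. A \<phi> \<in> \<real>" "x = cls U A" by (rule Rhat_E)
  thus ?thesis unfolding rrep_def
    using someI[of "\<lambda>A. moderate U A \<and> (\<forall>\<phi>. A \<phi> \<in> \<real>) \<and> x = cls U A" A] by blast
qed

lemma map_rrep: "set p \<subseteq> Rhat U \<Longrightarrow> map (cls U) (map rrep p) = p"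
  by (induction p) (auto dest: rrep)

lemma odd_root:
  assumes p: "p \<in> carrier (poly_ring ((Chat U)\<lparr>carrier := Rhat U\<rparr>))"
    and od: "odd (Polynomials.degree p)"
  shows "\<exists>x\<in>carrier ((Chat U)\<lparr>carrier := Rhat U\<rparr>).
           ring.eval ((Chat U)\<lparr>carrier := Rhat U\<rparr>) p x = \<zero>\<^bsub>(Chat U)\<lparr>carrier := Rhat U\<rparr>\<^esub>"
proof -
  have pol: "polynomial\<^bsub>(Chat U)\<lparr>carrier := Rhat U\<rparr>\<^esub> (Rhat U) p"
    using p by (simp add: univ_poly_carrier)
  obtain x0 xs where p_eq: "p = x0 # xs" using od by (cases p) auto
  have sp: "set p \<subseteq> Rhat U" and hd: "x0 \<noteq> \<zero>\<^bsub>Chat U\<^esub>"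
    using pol p_eq by (auto simp: polynomial_def)
  define A0 where "A0 = rrep x0"
  define Bs where "Bs = map rrep xs"
  have A0: "moderate U A0" "\<forall>\<phi>. A0 \<phi> \<in> \<real>" "x0 = cls U A0" using rrep[of x0] sp p_eq by (auto simp: A0_def)
  have Bs: "\<forall>B\<in>set Bs. moderate U B" and BsR: "\<forall>B\<in>set Bs. \<forall>\<phi>. B \<phi> \<in> \<real>"
    using rrep sp p_eq by (auto simp: Bs_def)
  have pm: "p = map (cls U) (A0 # Bs)" using map_rrep[OF sp] p_eq by (simp add: A0_def Bs_def)
  have oddB: "odd (length Bs)" using od p_eq by (simp add: Bs_def)
  have nn: "\<not> negligible_net U A0" using nonzero_not_negl A0 hd by simp
  have ex: "\<exists>z\<in>\<real>. neval (A0 \<phi> # map (\<lambda>B. B \<phi>) Bs) z = 0" if nz: "A0 \<phi> \<noteq> 0" for \<phi>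
  proof -
    have a0: "A0 \<phi> = complex_of_real (Re (A0 \<phi>))" using A0(2) by simp
    hence "Re (A0 \<phi>) \<noteq> 0" using nz by (metis of_real_0)
    then obtain x where x: "neval (Re (A0 \<phi>) # map (\<lambda>B. Re (B \<phi>)) Bs) x = 0"
      using neval_real_root[of "Re (A0 \<phi>)" "map (\<lambda>B. Re (B \<phi>)) Bs"] oddB by auto
    have mB: "map (\<lambda>B. B \<phi>) Bs = map (\<lambda>B. complex_of_real (Re (B \<phi>))) Bs"
      using BsR by (intro map_cong) auto
    have "A0 \<phi> # map (\<lambda>B. B \<phi>) Bs = map complex_of_real (Re (A0 \<phi>) # map (\<lambda>B. Re (B \<phi>)) Bs)"
      using mB a0 by (simp add: o_def)
    hence "neval (A0 \<phi> # map (\<lambda>B. B \<phi>) Bs) (complex_of_real x) = 0"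
      using x by (simp only: neval_of_real) simp
    thus ?thesis using Reals_of_real[of x] by blast
  qed
  have "\<exists>Z. moderate U Z \<and> (\<forall>\<phi>. Z \<phi> \<in> \<real>) \<and> C.eval (map (cls U) (A0 # Bs)) (cls U Z) = \<zero>\<^bsub>Chat U\<^esub>"
    by (rule root_net[OF A0(1) nn Bs]) (use ex in auto)
  then obtain Z where Z: "moderate U Z" "\<forall>\<phi>. Z \<phi> \<in> \<real>" "C.eval (map (cls U) (A0 # Bs)) (cls U Z) = \<zero>\<^bsub>Chat U\<^esub>"
    by blast
  have "cls U Z \<in> Rhat U" using Z by (simp add: cls_in_Rhat)
  moreover have "ring.eval ((Chat U)\<lparr>carrier := Rhat U\<rparr>) p (cls U Z) = \<zero>\<^bsub>(Chat U)\<lparr>carrier := Rhat U\<rparr>\<^esub>"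
    using Z pm C.eval_consistent[OF Rhat_subring] by simp
  ultimately show ?thesis by auto
qed

lemma Rhat_real_closed: "real_closed ((Chat U)\<lparr>carrier := Rhat U\<rparr>)"
  unfolding real_closed_def
proof (intro conjI allI impI ballI)
  show "field ((Chat U)\<lparr>carrier := Rhat U\<rparr>)" by (rule RR.field_axioms)
next
  fix n :: nat and f assume "f \<in> {..<n} \<rightarrow> carrier ((Chat U)\<lparr>carrier := Rhat U\<rparr>)"
  then show "finsum ((Chat U)\<lparr>carrier := Rhat U\<rparr>) (\<lambda>k. f k \<otimes>\<^bsub>(Chat U)\<lparr>carrier := Rhat U\<rparr>\<^esub> f k) {..<n}
         \<noteq> \<ominus>\<^bsub>(Chat U)\<lparr>carrier := Rhat U\<rparr>\<^esub> \<one>\<^bsub>(Chat U)\<lparr>carrier := Rhat U\<rparr>\<^esub>"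
    by (rule formally_real)
next
  fix a assume "a \<in> carrier ((Chat U)\<lparr>carrier := Rhat U\<rparr>)"
  then show "\<exists>b\<in>carrier ((Chat U)\<lparr>carrier := Rhat U\<rparr>). b \<otimes>\<^bsub>(Chat U)\<lparr>carrier := Rhat U\<rparr>\<^esub> b = a \<or>
            b \<otimes>\<^bsub>(Chat U)\<lparr>carrier := Rhat U\<rparr>\<^esub> b = \<ominus>\<^bsub>(Chat U)\<lparr>carrier := Rhat U\<rparr>\<^esub> a"
    using squares by simp
next
  fix p assume "p \<in> carrier (poly_ring ((Chat U)\<lparr>carrier := Rhat U\<rparr>))" "odd (Polynomials.degree p)"
  then show "\<exists>x\<in>carrier ((Chat U)\<lparr>carrier := Rhat U\<rparr>).
           ring.eval ((Chat U)\<lparr>carrier := Rhat U\<rparr>) p x = \<zero>\<^bsub>(Chat U)\<lparr>carrier := Rhat U\<rparr>\<^esub>"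
    by (rule odd_root)
qed

lemma decomp:
  assumes x: "x \<in> carrier (Chat U)"
  shows "\<exists>!ab. fst ab \<in> Rhat U \<and> snd ab \<in> Rhat U \<and>
            x = fst ab \<oplus>\<^bsub>Chat U\<^esub> (cls U (\<lambda>_. \<i>) \<otimes>\<^bsub>Chat U\<^esub> snd ab)"
proof -
  obtain A where A: "moderate U A" "x = cls U A" using x by (rule Chat_E)
  define ReA where "ReA \<phi> = complex_of_real (Re (A \<phi>))" for \<phi>
  define ImA where "ImA \<phi> = complex_of_real (Im (A \<phi>))" for \<phi>
  have mRe: "moderate U ReA" unfolding ReA_def by (rule mod_Re[OF A(1)])
  have mIm: "moderate U ImA" unfolding ImA_def by (rule mod_Im[OF A(1)])
  have key: "cls U A1 \<oplus>\<^bsub>Chat U\<^esub> (cls U (\<lambda>_. \<i>) \<otimes>\<^bsub>Chat U\<^esub> cls U B1) = cls U (\<lambda>\<phi>. A1 \<phi> + \<i> * B1 \<phi>)"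
    if "moderate U A1" "moderate U B1" for A1 B1
    using that by (simp add: mult_cls add_cls mod_const mod_mult)
  show ?thesis
  proof (rule ex1I[of _ "(cls U ReA, cls U ImA)"])
    have "(\<lambda>\<phi>. ReA \<phi> + \<i> * ImA \<phi>) = A" by (rule ext) (simp add: ReA_def ImA_def complex_eq[symmetric])
    thus "fst (cls U ReA, cls U ImA) \<in> Rhat U \<and> snd (cls U ReA, cls U ImA) \<in> Rhat U \<and>
          x = fst (cls U ReA, cls U ImA) \<oplus>\<^bsub>Chat U\<^esub> (cls U (\<lambda>_. \<i>) \<otimes>\<^bsub>Chat U\<^esub> snd (cls U ReA, cls U ImA))"
      using key[OF mRe mIm] mRe mIm A by (simp add: cls_in_Rhat ReA_def ImA_def)
  next
    fix ab assume h: "fst ab \<in> Rhat U \<and> snd ab \<in> Rhat U \<and>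
          x = fst ab \<oplus>\<^bsub>Chat U\<^esub> (cls U (\<lambda>_. \<i>) \<otimes>\<^bsub>Chat U\<^esub> snd ab)"
    obtain A1 where A1: "moderate U A1" "\<forall>\<phi>. A1 \<phi> \<in> \<real>" "fst ab = cls U A1" using h by (auto elim!: Rhat_E)
    obtain B1 where B1: "moderate U B1" "\<forall>\<phi>. B1 \<phi> \<in> \<real>" "snd ab = cls U B1" using h by (auto elim!: Rhat_E)
    have m1: "moderate U (\<lambda>\<phi>. A1 \<phi> + \<i> * B1 \<phi>)" by (intro mod_add mod_mult mod_const A1(1) B1(1))
    have "cls U (\<lambda>\<phi>. A1 \<phi> + \<i> * B1 \<phi>) = cls U A" using h A1 B1 key A by simp
    hence ng: "negligible_net U (\<lambda>\<phi>. A1 \<phi> + \<i> * B1 \<phi> - A \<phi>)" using cls_eq_iff[OF m1 A(1)] by simp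
    have "negligible_net U (\<lambda>\<phi>. A1 \<phi> - ReA \<phi>)"
      by (rule negl_mono[OF ng]) (use A1(2) B1(2) re_im_le(1) in \<open>simp add: ReA_def\<close>)
    hence e1: "cls U A1 = cls U ReA" using cls_eq_iff[OF A1(1) mRe] by simp
    have "negligible_net U (\<lambda>\<phi>. B1 \<phi> - ImA \<phi>)"
      by (rule negl_mono[OF ng]) (use A1(2) B1(2) re_im_le(2) in \<open>simp add: ImA_def\<close>)
    hence e2: "cls U B1 = cls U ImA" using cls_eq_iff[OF B1(1) mIm] by simp
    show "ab = (cls U ReA, cls U ImA)" using A1(3) B1(3) e1 e2 by (simp add: prod_eq_iff)
  qed
qed

end

theorem theorem4p2:
  fixes U :: "('d::finite) tf set set"
  assumes "free_ultrafilter_on testfns U"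
    and "\<forall>n::nat. n \<ge> 1 \<longrightarrow> Dn n \<in> U"
    and "cplus_good testfns U"
  shows "algebraically_closed (Chat U)
       \<and> subfield (Rhat U) (Chat U)
       \<and> real_closed ((Chat U)\<lparr>carrier := Rhat U\<rparr>)
       \<and> (\<forall>x\<in>carrier (Chat U). \<exists>!ab. fst ab \<in> Rhat U \<and> snd ab \<in> Rhat U \<and>
            x = fst ab \<oplus>\<^bsub>Chat U\<^esub> (cls U (\<lambda>_. \<i>) \<otimes>\<^bsub>Chat U\<^esub> snd ab))"
proof -
  interpret ctx U using assms(1,2) by unfold_locales
  show ?thesis using Chat_alg_closed Rhat_subfield Rhat_real_closed decomp by blast
qed

end
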